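(* In $NOM$, for every finite sequence $\Gamma$ of formulas and all formulas $\phi,\psi$, the following rule is derivable: from $\Gamma\vdash\psi$ and $\Gamma,\phi\vdash\psi$ infer $\Gamma,\neg\phi\vdash\psi$.
   Context: The propositional deductive system $NOM$: formulas are built from propositional letters using $\wedge$, $\rightarrow$, $\neg$. Sequents are $\phi_1,\ldots,\phi_n\vdash\psi$ ($n\ge0$) with antecedent a finite ordered sequence. With $\Gamma$ a finite possibly empty sequence of formulas and $\phi,\psi,\chi$ formulas, the rules of $NOM$ are: (assumption) $\Gamma,\phi\vdash\phi$; (cut) $\Gamma\vdash\phi$, $\Gamma,\phi\vdash\psi$ $\Rightarrow$ $\Gamma\vdash\psi$; (paste) $\Gamma\vdash\phi$, $\Gamma\vdash\psi$ $\Rightarrow$ $\Gamma,\phi\vdash\psi$; (compatible exchange) $\Gamma,\phi,\psi\vdash\phi$, $\Gamma,\phi,\psi\vdash\chi$, $\Gamma,\psi,\phi\vdash\psi$ $\Rightarrow$ $\Gamma,\psi,\phi\vdash\chi$; ($\wedge$-intro) $\Gamma\vdash\phi$, $\Gamma\vdash\psi$ $\Rightarrow$ $\Gamma\vdash\phi\wedge\psi$; ($\wedge$-elim) $\Gamma\vdash\phi\wedge\psi$ $\Rightarrow$ $\Gamma\vdash\phi$ and $\Rightarrow$ $\Gamma\vdash\psi$; ($\rightarrow$-intro) $\Gamma,\phi\vdash\psi$ $\Rightarrow$ $\Gamma\vdash\phi\rightarrow\psi$; ($\rightarrow$-elim) $\Gamma\vdash\phi\rightarrow\psi$ $\Rightarrow$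 $\Gamma,\phi\vdash\psi$; (excluded middle) $\Gamma,\phi\vdash\psi$, $\Gamma,\neg\phi\vdash\psi$ $\Rightarrow$ $\Gamma\vdash\psi$; (explosion) $\Gamma\vdash\neg\phi$ $\Rightarrow$ $\Gamma,\phi\vdash\psi$. A rule schema is derivable if in every instance its conclusion can be derived from its premises using these rules. *)

theory Defs
  imports Main
begin

datatype form = Letter nat | And form form | Imp form form | Neg form

type_synonym sequent = "form list \<times> form"

text \<open>Derivability in NOM from a set H of premise sequents (used as extra axioms).
  A rule schema is derivable iff for every instance its conclusion is derivable
  from its premises.\<close>
inductive nom_deriv :: "sequent set \<Rightarrow> sequent \<Rightarrow> bool" for H :: "sequent set" where
  premise: "s \<in> H \<Longrightarrow> nom_deriv H s"
| assumption: "nom_deriv H (G @ [p], p)"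
| cut: "nom_deriv H (G, p) \<Longrightarrow> nom_deriv H (G @ [p], q) \<Longrightarrow> nom_deriv H (G, q)"
| paste: "nom_deriv H (G, p) \<Longrightarrow> nom_deriv H (G, q) \<Longrightarrow> nom_deriv H (G @ [p], q)"
| compat_exch: "nom_deriv H (G @ [p, q], p) \<Longrightarrow> nom_deriv H (G @ [p, q], r) \<Longrightarrow>
      nom_deriv H (G @ [q, p], q) \<Longrightarrow> nom_deriv H (G @ [q, p], r)"
| and_intro: "nom_deriv H (G, p) \<Longrightarrow> nom_deriv H (G, q) \<Longrightarrow> nom_deriv H (G, And p q)"
| and_elim1: "nom_deriv H (G, And p q) \<Longrightarrow> nom_deriv H (G, p)"
| and_elim2: "nom_deriv H (G, And p q) \<Longrightarrow> nom_deriv H (G, q)"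
| imp_intro: "nom_deriv H (G @ [p], q) \<Longrightarrow> nom_deriv H (G, Imp p q)"
| imp_elim: "nom_deriv H (G, Imp p q) \<Longrightarrow> nom_deriv H (G @ [p], q)"
| excluded_middle: "nom_deriv H (G @ [p], q) \<Longrightarrow> nom_deriv H (G @ [Neg p], q) \<Longrightarrow> nom_deriv H (G, q)"
| explosion: "nom_deriv H (G, Neg p) \<Longrightarrow> nom_deriv H (G @ [p], q)"

end

theory Submission
  imports Defs
begin

lemma app2: "(G @ [x]) @ [y] = G @ [x, y]" by simp
lemma app3: "(G @ [x, y]) @ [z] = G @ [x, y, z]" by simp

lemma dne: "nom_deriv H (G @ [Neg (Neg p)], p)"
proof -
  have 1: "nom_deriv H ((G @ [Neg (Neg p)]) @ [p], p)" by (rule nom_deriv.assumption)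
  have 2: "nom_deriv H ((G @ [Neg (Neg p)]) @ [Neg p], p)"
    by (rule nom_deriv.explosion, rule nom_deriv.assumption)
  show ?thesis by (rule nom_deriv.excluded_middle[OF 1 2])
qed

lemma inc2: "nom_deriv H (G @ [p, Neg p], r)"
proof -
  define X where "X = Imp p (Imp (Neg p) p)"
  have a1: "nom_deriv H (G @ [Neg p, p], q)" for q
    using nom_deriv.explosion[OF nom_deriv.assumption[of H G "Neg p"]] by simp
  have b1: "nom_deriv H ((G @ [Neg p, p]) @ [Neg p], p)"
    by (rule nom_deriv.explosion, rule a1)
  have b2: "nom_deriv H (G @ [Neg p], X)"
    unfolding X_def
    apply (rule nom_deriv.imp_intro)
    apply (rule nom_deriv.imp_intro)
    using b1 by simp
  have c0: "nom_deriv H (G @ [Neg (Neg p)], p)" by (rule dne)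
  have c1: "nom_deriv H ((G @ [Neg (Neg p)]) @ [Neg p], p)"
    by (rule nom_deriv.explosion, rule nom_deriv.assumption)
  have c2: "nom_deriv H (G @ [Neg (Neg p)], Imp (Neg p) p)"
    by (rule nom_deriv.imp_intro[OF c1])
  have c3: "nom_deriv H ((G @ [Neg (Neg p)]) @ [p], Imp (Neg p) p)"
    by (rule nom_deriv.paste[OF c0 c2])
  have c4: "nom_deriv H (G @ [Neg (Neg p)], X)"
    unfolding X_def by (rule nom_deriv.imp_intro[OF c3])
  have x: "nom_deriv H (G, X)" by (rule nom_deriv.excluded_middle[OF b2 c4])
  have y: "nom_deriv H (G @ [p], Imp (Neg p) p)"
    using nom_deriv.imp_elim[of H G p "Imp (Neg p) p"] x unfolding X_def by simp
  have z: "nom_deriv H (G @ [p, Neg p], p)"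
    using nom_deriv.imp_elim[OF y] by simp
  have e1: "nom_deriv H (G @ [Neg p, p], Neg p)" by (rule a1)
  have e2: "nom_deriv H (G @ [Neg p, p], r)" by (rule a1)
  show ?thesis by (rule nom_deriv.compat_exch[OF e1 e2 z])
qed

lemma dni: "nom_deriv H (G @ [p], Neg (Neg p))"
proof -
  have 1: "nom_deriv H ((G @ [p]) @ [Neg p], Neg (Neg p))" using inc2[of H G p] by simp
  have 2: "nom_deriv H ((G @ [p]) @ [Neg (Neg p)], Neg (Neg p))" by (rule nom_deriv.assumption)
  show ?thesis by (rule nom_deriv.excluded_middle[OF 1 2])
qed

lemma dni': "nom_deriv H (G, p) \<Longrightarrow> nom_deriv H (G, Neg (Neg p))"
  by (rule nom_deriv.cut, assumption, rule dni)

lemma incons: "nom_deriv H (G, p) \<Longrightarrow> nom_deriv H (G @ [Neg p], q)"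
  by (rule nom_deriv.explosion, rule dni')

lemma L1:
  assumes "nom_deriv H (G, Neg a)" "nom_deriv H (G @ [b], a)"
  shows "nom_deriv H (G @ [b], r)"
proof -
  have i1: "nom_deriv H (G @ [a], Neg b)" using nom_deriv.explosion[OF assms(1)] .
  have i2: "nom_deriv H (G @ [a, b], q)" for q using nom_deriv.explosion[OF i1] by simp
  have i4: "nom_deriv H (G @ [b, a], b)"
    using nom_deriv.paste[OF assms(2) nom_deriv.assumption[of H G b]] by simp
  have i5: "nom_deriv H (G @ [b, a], r)" by (rule nom_deriv.compat_exch[OF i2 i2 i4])
  show ?thesis by (rule nom_deriv.cut[OF assms(2)]) (use i5 in simp)
qed

lemma negI: "nom_deriv H (G @ [b], Neg b) \<Longrightarrow> nom_deriv H (G, Neg b)"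
  by (rule nom_deriv.excluded_middle, assumption, rule nom_deriv.assumption)

lemma G1:
  assumes le: "\<And>G'. nom_deriv H (G' @ [b], a)"
    and h: "nom_deriv H (G @ [Neg a, Neg b], r)"
  shows "nom_deriv H (G @ [Neg b, Neg a], r)"
proof -
  have j1: "nom_deriv H ((G @ [Neg a]) @ [b], q)" for q
    by (rule L1[OF nom_deriv.assumption le])
  have j2: "nom_deriv H (G @ [Neg a], Neg b)" by (rule negI[OF j1])
  have j3: "nom_deriv H (G @ [Neg a, Neg b], Neg a)"
    using nom_deriv.paste[OF j2 nom_deriv.assumption[of H G "Neg a"]] by simp
  have j4: "nom_deriv H ((G @ [Neg b, Neg a]) @ [b], q)" for q
    by (rule L1[OF _ le]) (use nom_deriv.assumption[of H "G @ [Neg b]" "Neg a"] in simp)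
  have j5: "nom_deriv H (G @ [Neg b, Neg a], Neg b)" by (rule negI[OF j4])
  show ?thesis by (rule nom_deriv.compat_exch[OF j3 h j5])
qed

lemma G2:
  assumes le: "\<And>G'. nom_deriv H (G' @ [b], a)"
    and h: "nom_deriv H (G, a)"
  shows "nom_deriv H (G @ [Neg b], a)"
proof -
  have k1: "nom_deriv H (G @ [Neg a], q)" for q by (rule incons[OF h])
  have k2: "nom_deriv H (G @ [Neg a, Neg b], a)"
    using nom_deriv.explosion[OF k1[of "Neg (Neg b)"]] by simp
  have k3: "nom_deriv H ((G @ [Neg b]) @ [Neg a], a)" using G1[OF le k2] by simp
  show ?thesis by (rule nom_deriv.excluded_middle[OF nom_deriv.assumption k3])
qed

theorem theorem4p4:
  fixes \<Gamma> :: "form list" and \<phi> \<psi> :: form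
  shows "nom_deriv {(\<Gamma>, \<psi>), (\<Gamma> @ [\<phi>], \<psi>)} (\<Gamma> @ [Neg \<phi>], \<psi>)"
proof -
  define H where "H = {(\<Gamma>, \<psi>), (\<Gamma> @ [\<phi>], \<psi>)}"
  define c where "c = And \<phi> \<psi>"
  have h1: "nom_deriv H (\<Gamma>, \<psi>)" by (rule nom_deriv.premise) (simp add: H_def)
  have h2: "nom_deriv H (\<Gamma> @ [\<phi>], \<psi>)" by (rule nom_deriv.premise) (simp add: H_def)
  have le1: "nom_deriv H (G' @ [c], \<psi>)" for G'
    unfolding c_def by (rule nom_deriv.and_elim2, rule nom_deriv.assumption)
  have cphi: "nom_deriv H (G' @ [c], \<phi>)" for G'
    unfolding c_def by (rule nom_deriv.and_elim1, rule nom_deriv.assumption)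
  have le2: "nom_deriv H (G' @ [c], Imp \<phi> \<psi>)" for G'
    by (rule nom_deriv.imp_intro, rule nom_deriv.paste[OF cphi le1])
  have h3: "nom_deriv H (\<Gamma>, Imp \<phi> \<psi>)" by (rule nom_deriv.imp_intro[OF h2])
  have g1: "nom_deriv H (\<Gamma> @ [Neg c], \<psi>)" by (rule G2[OF le1 h1])
  have g2: "nom_deriv H (\<Gamma> @ [Neg c], Imp \<phi> \<psi>)" by (rule G2[OF le2 h3])
  have g3: "nom_deriv H ((\<Gamma> @ [Neg c]) @ [\<phi>], c)"
    unfolding c_def
    by (rule nom_deriv.and_intro, rule nom_deriv.assumption, rule nom_deriv.imp_elim[OF g2[unfolded c_def]])
  have g4: "nom_deriv H ((\<Gamma> @ [Neg c]) @ [\<phi>], Neg \<phi>)"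
    by (rule L1[OF nom_deriv.assumption g3])
  have g5: "nom_deriv H (\<Gamma> @ [Neg c], Neg \<phi>)" by (rule negI[OF g4])
  have g6: "nom_deriv H ((\<Gamma> @ [Neg c]) @ [Neg \<phi>], \<psi>)" by (rule nom_deriv.paste[OF g5 g1])
  have b1: "nom_deriv H (\<Gamma> @ [Neg c], Imp (Neg \<phi>) \<psi>)" by (rule nom_deriv.imp_intro[OF g6])
  have b2: "nom_deriv H ((\<Gamma> @ [c]) @ [Neg \<phi>], \<psi>)"
    by (rule nom_deriv.explosion, rule dni', rule cphi)
  have b3: "nom_deriv H (\<Gamma> @ [c], Imp (Neg \<phi>) \<psi>)" by (rule nom_deriv.imp_intro[OF b2])
  have b4: "nom_deriv H (\<Gamma>, Imp (Neg \<phi>) \<psi>)" by (rule nom_deriv.excluded_middle[OF b3 b1])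
  show ?thesis using nom_deriv.imp_elim[OF b4] unfolding H_def .
qed

end
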